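(* Let $(D,\mathrm{left},\mathrm{right})$ be an interval domain. For $a\le b$ in $\max(D)$ let $\phi^{-1}[a,b]$ denote the unique $z\in D$ with $\mathrm{left}(z)=a$ and $\mathrm{right}(z)=b$. Then: (i) if $a\ll p\ll b$ in $(\max(D),\le)$, then $\phi^{-1}[a,b]\ll p$ in $D$; (ii) the interval topology on the bicontinuous poset $(\max(D),\le)$ coincides with the relative Scott topology that $\max(D)$ inherits from $D$. Thus $(\max(D),\le)$ is a globally hyperbolic poset.
   Context: For a poset $(P,\sqsubseteq)$: directed (resp. filtered) sets are nonempty sets in which any two elements have an upper (resp. lower) bound in the set; $\bigsqcup S$ is the supremum; $x\ll y$ iff for every directed $S\subseteq P$ with a supremum, $y\sqsubseteq\bigsqcup S$ implies $x\sqsubseteq s$ for some $s\in S$; $\Uparrow x=\{a: x\ll a\}$, $\Downarrow x=\{a:a\ll x\}$. $P$ is continuous if there is $B\subseteq P$ such that for each $x$, $B\cap\Downarrow x$ contains a directed set with supremum $x$. A continuous poset is bicontinuous if (1) $x\ll y$ iff for every filtered $S$ having an infimum, $\bigwedge S\sqsubseteq x$ implies $s\sqsubseteq y$ for some $s\in S$; and (2) each $\Uparrow x$ is filtered with infimum $x$. On a bicontinuous poset the sets $(a,b)=\{x: a\ll x\ll b\}$ form a basis of the interval topology. A globally hyperbolic poset is a bicontinuous poset in which every closed interval $\{x: a\le x\le b\}$ is compact in the interval topology. A continuous dcpo is a continuous poset in which every directed set has a supremum. $\max(P)$ is the set of maximal elements, $x\sqcap y$ the infimum of $\{x,y\}$.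 The Scott topology consists of upper sets $U$ such that $\bigsqcup S\in U$ implies $S\cap U\ne\emptyset$ for directed $S$. An interval poset is a poset $D$ with functions $\mathrm{left},\mathrm{right}:D\to\max(D)$ such that (only named infima are assumed to exist): (i) $x=\mathrm{left}(x)\sqcap\mathrm{right}(x)$ for all $x$; (ii) if $\mathrm{right}(x)=\mathrm{left}(y)$ then $\mathrm{left}(x\sqcap y)=\mathrm{left}(x)$ and $\mathrm{right}(x\sqcap y)=\mathrm{right}(y)$; (iii) for $p\in\max(D)$ with $x\sqsubseteq p$: $\mathrm{left}(\mathrm{left}(x)\sqcap p)=\mathrm{left}(x)$, $\mathrm{right}(\mathrm{left}(x)\sqcap p)=p$, $\mathrm{left}(p\sqcap\mathrm{right}(x))=p$, $\mathrm{right}(p\sqcap\mathrm{right}(x))=\mathrm{right}(x)$. On $\max(D)$ define $a\le b$ iff $a=\mathrm{left}(z)$, $b=\mathrm{right}(z)$ for some $z\in D$; this is a partial order, and $x\mapsto[\mathrm{left}(x),\mathrm{right}(x)]$ is an order isomorphism from $D$ onto the closed intervals of $(\max(D),\le)$ under reverse inclusion. For $p,q\in\max(D)$ let $[p,\cdot]=\mathrm{left}^{-1}(p)$ and $[\cdot,q]=\mathrm{right}^{-1}(q)$, regarded as subposets of $D$. An interval domain is an interval poset $(D,\mathrm{left},\mathrm{right})$ such that $D$ is a continuous dcpo and: (i) if $p\in\Uparrow x\cap\max(D)$ then $\Uparrow(\mathrm{left}(x)\sqcap p)\ne\emptyset$ and $\Uparrow(p\sqcap\mathrm{right}(x))\ne\emptyset$;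 (ii) for all $x\in D$ the following are equivalent: (a) $\Uparrow x\ne\emptyset$; (b) for all $y\in[\mathrm{left}(x),\cdot]$ with $y\sqsubseteq x$, $y\ll\mathrm{right}(y)$ in the poset $[\cdot,\mathrm{right}(y)]$; (c) for all $y\in[\cdot,\mathrm{right}(x)]$ with $y\sqsubseteq x$, $y\ll\mathrm{left}(y)$ in the poset $[\mathrm{left}(y),\cdot]$; (iii)(a) for every directed $S\subseteq[p,\cdot]$, $\mathrm{left}(\bigsqcup S)=p$ and $\mathrm{right}(\bigsqcup S)=\mathrm{right}(\bigsqcup T)$ for every directed $T\subseteq[q,\cdot]$ with $\mathrm{right}(T)=\mathrm{right}(S)$ (images); (iii)(b) for every directed $S\subseteq[\cdot,q]$, $\mathrm{right}(\bigsqcup S)=q$ and $\mathrm{left}(\bigsqcup S)=\mathrm{left}(\bigsqcup T)$ for every directed $T\subseteq[\cdot,p]$ with $\mathrm{left}(T)=\mathrm{left}(S)$; (iv) for all $x\in D$, $\{y\in\max(D): x\sqsubseteq y\}$ is compact in the relative Scott topology. For an interval domain, $(\max(D),\le)$ is a bicontinuous poset. *)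

theory Defs
  imports "HOL-Analysis.Analysis"
begin

definition poset :: "'a set \<Rightarrow> ('a \<Rightarrow> 'a \<Rightarrow> bool) \<Rightarrow> bool" where
  "poset P le \<longleftrightarrow> (\<forall>x\<in>P. le x x)
     \<and> (\<forall>x\<in>P. \<forall>y\<in>P. le x y \<and> le y x \<longrightarrow> x = y)
     \<and> (\<forall>x\<in>P. \<forall>y\<in>P. \<forall>z\<in>P. le x y \<and> le y z \<longrightarrow> le x z)"

definition directed :: "'a set \<Rightarrow> ('a \<Rightarrow> 'a \<Rightarrow> bool) \<Rightarrow> 'a set \<Rightarrow> bool" where
  "directed P le S \<longleftrightarrow> S \<subseteq> P \<and> S \<noteq> {} \<and> (\<forall>x\<in>S. \<forall>y\<in>S. \<exists>z\<in>S. le x z \<and> le y z)"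

definition filtered :: "'a set \<Rightarrow> ('a \<Rightarrow> 'a \<Rightarrow> bool) \<Rightarrow> 'a set \<Rightarrow> bool" where
  "filtered P le S \<longleftrightarrow> S \<subseteq> P \<and> S \<noteq> {} \<and> (\<forall>x\<in>S. \<forall>y\<in>S. \<exists>z\<in>S. le z x \<and> le z y)"

definition is_sup :: "'a set \<Rightarrow> ('a \<Rightarrow> 'a \<Rightarrow> bool) \<Rightarrow> 'a set \<Rightarrow> 'a \<Rightarrow> bool" where
  "is_sup P le S s \<longleftrightarrow> s \<in> P \<and> (\<forall>x\<in>S. le x s) \<and> (\<forall>u\<in>P. (\<forall>x\<in>S. le x u) \<longrightarrow> le s u)"

definition is_inf :: "'a set \<Rightarrow> ('a \<Rightarrow> 'a \<Rightarrow> bool) \<Rightarrow> 'a set \<Rightarrow> 'a \<Rightarrow> bool" where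
  "is_inf P le S i \<longleftrightarrow> i \<in> P \<and> (\<forall>x\<in>S. le i x) \<and> (\<forall>u\<in>P. (\<forall>x\<in>S. le u x) \<longrightarrow> le u i)"

definition psup :: "'a set \<Rightarrow> ('a \<Rightarrow> 'a \<Rightarrow> bool) \<Rightarrow> 'a set \<Rightarrow> 'a" where
  "psup P le S = (THE s. is_sup P le S s)"

definition meet :: "'a set \<Rightarrow> ('a \<Rightarrow> 'a \<Rightarrow> bool) \<Rightarrow> 'a \<Rightarrow> 'a \<Rightarrow> 'a" where
  "meet P le x y = (THE i. is_inf P le {x, y} i)"

definition way_below :: "'a set \<Rightarrow> ('a \<Rightarrow> 'a \<Rightarrow> bool) \<Rightarrow> 'a \<Rightarrow> 'a \<Rightarrow> bool" where
  "way_below P le x y \<longleftrightarrow> x \<in> P \<and> y \<in> P \<and>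
     (\<forall>S s. directed P le S \<longrightarrow> is_sup P le S s \<longrightarrow> le y s \<longrightarrow> (\<exists>t\<in>S. le x t))"

definition wb_up :: "'a set \<Rightarrow> ('a \<Rightarrow> 'a \<Rightarrow> bool) \<Rightarrow> 'a \<Rightarrow> 'a set" where
  "wb_up P le x = {a \<in> P. way_below P le x a}"

definition wb_down :: "'a set \<Rightarrow> ('a \<Rightarrow> 'a \<Rightarrow> bool) \<Rightarrow> 'a \<Rightarrow> 'a set" where
  "wb_down P le x = {a \<in> P. way_below P le a x}"

definition continuous_poset :: "'a set \<Rightarrow> ('a \<Rightarrow> 'a \<Rightarrow> bool) \<Rightarrow> bool" where
  "continuous_poset P le \<longleftrightarrow> poset P le \<and>
     (\<exists>B\<subseteq>P. \<forall>x\<in>P. \<exists>S. S \<subseteq> B \<inter> wb_down P le x \<and> directed P le S \<and> is_sup P le S x)"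

definition bicontinuous :: "'a set \<Rightarrow> ('a \<Rightarrow> 'a \<Rightarrow> bool) \<Rightarrow> bool" where
  "bicontinuous P le \<longleftrightarrow> continuous_poset P le
     \<and> (\<forall>x\<in>P. \<forall>y\<in>P. way_below P le x y \<longleftrightarrow>
          (\<forall>S i. filtered P le S \<longrightarrow> is_inf P le S i \<longrightarrow> le i x \<longrightarrow> (\<exists>s\<in>S. le s y)))
     \<and> (\<forall>x\<in>P. filtered P le (wb_up P le x) \<and> is_inf P le (wb_up P le x) x)"

definition open_interval :: "'a set \<Rightarrow> ('a \<Rightarrow> 'a \<Rightarrow> bool) \<Rightarrow> 'a \<Rightarrow> 'a \<Rightarrow> 'a set" where
  "open_interval P le a b = {x \<in> P. way_below P le a x \<and> way_below P le x b}"

definition interval_topology :: "'a set \<Rightarrow> ('a \<Rightarrow> 'a \<Rightarrow> bool) \<Rightarrow> 'a topology" where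
  "interval_topology P le =
     topology_generated_by {open_interval P le a b | a b. a \<in> P \<and> b \<in> P}"

definition globally_hyperbolic :: "'a set \<Rightarrow> ('a \<Rightarrow> 'a \<Rightarrow> bool) \<Rightarrow> bool" where
  "globally_hyperbolic P le \<longleftrightarrow> bicontinuous P le \<and>
     (\<forall>a\<in>P. \<forall>b\<in>P. compactin (interval_topology P le) {x \<in> P. le a x \<and> le x b})"

definition continuous_dcpo :: "'a set \<Rightarrow> ('a \<Rightarrow> 'a \<Rightarrow> bool) \<Rightarrow> bool" where
  "continuous_dcpo P le \<longleftrightarrow> continuous_poset P le \<and> (\<forall>S. directed P le S \<longrightarrow> (\<exists>s. is_sup P le S s))"

definition max_elems :: "'a set \<Rightarrow> ('a \<Rightarrow> 'a \<Rightarrow> bool) \<Rightarrow> 'a set" where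
  "max_elems P le = {x \<in> P. \<forall>y\<in>P. le x y \<longrightarrow> y = x}"

definition scott_open :: "'a set \<Rightarrow> ('a \<Rightarrow> 'a \<Rightarrow> bool) \<Rightarrow> 'a set \<Rightarrow> bool" where
  "scott_open P le U \<longleftrightarrow> U \<subseteq> P \<and> (\<forall>x\<in>U. \<forall>y\<in>P. le x y \<longrightarrow> y \<in> U)
     \<and> (\<forall>S s. directed P le S \<longrightarrow> is_sup P le S s \<longrightarrow> s \<in> U \<longrightarrow> S \<inter> U \<noteq> {})"

lemma istopology_scott_open: "istopology (scott_open P le)"
  unfolding istopology_def
proof (intro conjI allI impI)
  fix U V assume U: "scott_open P le U" and V: "scott_open P le V"
  show "scott_open P le (U \<inter> V)"
    unfolding scott_open_def
  proof (intro conjI ballI allI impI)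
    show "U \<inter> V \<subseteq> P" using U unfolding scott_open_def by blast
  next
    fix x y assume "x \<in> U \<inter> V" "y \<in> P" "le x y"
    then show "y \<in> U \<inter> V" using U V unfolding scott_open_def by blast
  next
    fix S s assume d: "directed P le S" and sp: "is_sup P le S s" and s: "s \<in> U \<inter> V"
    obtain a where a: "a \<in> S \<inter> U" using U d sp s unfolding scott_open_def by blast
    obtain b where b: "b \<in> S \<inter> V" using V d sp s unfolding scott_open_def by blast
    obtain c where c: "c \<in> S" "le a c" "le b c" using d a b unfolding directed_def by blast
    have "c \<in> P" using d c unfolding directed_def by blast
    then have "c \<in> U \<inter> V" using U V a b c unfolding scott_open_def by blast
    then show "S \<inter> (U \<inter> V) \<noteq> {}" using c by blast
  qed
next
  fix K assume K: "\<forall>U\<in>K. scott_open P le U"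
  show "scott_open P le (\<Union>K)"
    unfolding scott_open_def
  proof (intro conjI ballI allI impI)
    show "\<Union>K \<subseteq> P" using K unfolding scott_open_def by blast
  next
    fix x y assume "x \<in> \<Union>K" "y \<in> P" "le x y"
    then show "y \<in> \<Union>K" using K unfolding scott_open_def by blast
  next
    fix S s assume "directed P le S" "is_sup P le S s" "s \<in> \<Union>K"
    then show "S \<inter> \<Union>K \<noteq> {}" using K unfolding scott_open_def by blast
  qed
qed

definition scott_topology :: "'a set \<Rightarrow> ('a \<Rightarrow> 'a \<Rightarrow> bool) \<Rightarrow> 'a topology" where
  "scott_topology P le = topology (scott_open P le)"

text \<open>Interval posets. Only the named infima are asserted to exist.\<close>
definition interval_poset :: "'a set \<Rightarrow> ('a \<Rightarrow> 'a \<Rightarrow> bool) \<Rightarrow> ('a \<Rightarrow> 'a) \<Rightarrow> ('a \<Rightarrow> 'a) \<Rightarrow> bool" where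
  "interval_poset D le left right \<longleftrightarrow> poset D le
     \<and> (\<forall>x\<in>D. left x \<in> max_elems D le \<and> right x \<in> max_elems D le)
     \<and> (\<forall>x\<in>D. is_inf D le {left x, right x} x)
     \<and> (\<forall>x\<in>D. \<forall>y\<in>D. right x = left y \<longrightarrow>
          (\<exists>z. is_inf D le {x, y} z \<and> left z = left x \<and> right z = right y))
     \<and> (\<forall>x\<in>D. \<forall>p\<in>max_elems D le. le x p \<longrightarrow>
          (\<exists>z. is_inf D le {left x, p} z \<and> left z = left x \<and> right z = p)
        \<and> (\<exists>z. is_inf D le {p, right x} z \<and> left z = p \<and> right z = right x))"

definition ileq :: "'a set \<Rightarrow> ('a \<Rightarrow> 'a) \<Rightarrow> ('a \<Rightarrow> 'a) \<Rightarrow> 'a \<Rightarrow> 'a \<Rightarrow> bool" where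
  "ileq D left right a b \<longleftrightarrow> (\<exists>z\<in>D. left z = a \<and> right z = b)"

definition left_fib :: "'a set \<Rightarrow> ('a \<Rightarrow> 'a) \<Rightarrow> 'a \<Rightarrow> 'a set" where
  "left_fib D left p = {z \<in> D. left z = p}"

definition right_fib :: "'a set \<Rightarrow> ('a \<Rightarrow> 'a) \<Rightarrow> 'a \<Rightarrow> 'a set" where
  "right_fib D right q = {z \<in> D. right z = q}"

definition interval_domain :: "'a set \<Rightarrow> ('a \<Rightarrow> 'a \<Rightarrow> bool) \<Rightarrow> ('a \<Rightarrow> 'a) \<Rightarrow> ('a \<Rightarrow> 'a) \<Rightarrow> bool" where
  "interval_domain D le left right \<longleftrightarrow> interval_poset D le left right
     \<and> continuous_dcpo D le
     \<comment> \<open>(i)\<close>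
     \<and> (\<forall>x\<in>D. \<forall>p. p \<in> wb_up D le x \<inter> max_elems D le \<longrightarrow>
          wb_up D le (meet D le (left x) p) \<noteq> {} \<and> wb_up D le (meet D le p (right x)) \<noteq> {})
     \<comment> \<open>(ii)\<close>
     \<and> (\<forall>x\<in>D.
          (wb_up D le x \<noteq> {} \<longleftrightarrow>
            (\<forall>y\<in>left_fib D left (left x). le y x \<longrightarrow>
               way_below (right_fib D right (right y)) le y (right y)))
        \<and> (wb_up D le x \<noteq> {} \<longleftrightarrow>
            (\<forall>y\<in>right_fib D right (right x). le y x \<longrightarrow>
               way_below (left_fib D left (left y)) le y (left y))))
     \<comment> \<open>(iii)(a)\<close>
     \<and> (\<forall>p\<in>max_elems D le. \<forall>S. directed D le S \<and> S \<subseteq> left_fib D left p \<longrightarrow>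
          left (psup D le S) = p
          \<and> (\<forall>q\<in>max_elems D le. \<forall>T. directed D le T \<and> T \<subseteq> left_fib D left q
               \<and> right ` T = right ` S \<longrightarrow> right (psup D le S) = right (psup D le T)))
     \<comment> \<open>(iii)(b)\<close>
     \<and> (\<forall>q\<in>max_elems D le. \<forall>S. directed D le S \<and> S \<subseteq> right_fib D right q \<longrightarrow>
          right (psup D le S) = q
          \<and> (\<forall>p\<in>max_elems D le. \<forall>T. directed D le T \<and> T \<subseteq> right_fib D right p
               \<and> left ` T = left ` S \<longrightarrow> left (psup D le S) = left (psup D le T)))
     \<comment> \<open>(iv)\<close>
     \<and> (\<forall>x\<in>D. compactin (subtopology (scott_topology D le) (max_elems D le))
                 {y \<in> max_elems D le. le x y})"

definition phi_inv :: "'a set \<Rightarrow> ('a \<Rightarrow> 'a) \<Rightarrow> ('a \<Rightarrow> 'a) \<Rightarrow> 'a \<Rightarrow> 'a \<Rightarrow> 'a" where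
  "phi_inv D left right a b = (THE z. z \<in> D \<and> left z = a \<and> right z = b)"

end

theory Submission
  imports Defs
begin


lemma flip_directed: "directed P (\<lambda>x y. le y x) S = filtered P le S"
  unfolding directed_def filtered_def by auto
lemma flip_filtered: "filtered P (\<lambda>x y. le y x) S = directed P le S"
  unfolding directed_def filtered_def by auto
lemma flip_is_sup: "is_sup P (\<lambda>x y. le y x) S s = is_inf P le S s"
  unfolding is_sup_def is_inf_def by auto
lemma flip_is_inf: "is_inf P (\<lambda>x y. le y x) S s = is_sup P le S s"
  unfolding is_sup_def is_inf_def by auto
lemma flip_poset: "poset P (\<lambda>x y. le y x) = poset P le"
  unfolding poset_def by blast
lemma flip_way_below: "way_below P (\<lambda>x y. le y x) x y \<longleftrightarrow> x \<in> P \<and> y \<in> P \<and>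
   (\<forall>S s. filtered P le S \<longrightarrow> is_inf P le S s \<longrightarrow> le s y \<longrightarrow> (\<exists>t\<in>S. le t x))"
proof -
  have "way_below P (\<lambda>x y. le y x) x y \<longleftrightarrow> x \<in> P \<and> y \<in> P \<and>
     (\<forall>S s. directed P (\<lambda>x y. le y x) S \<longrightarrow> is_sup P (\<lambda>x y. le y x) S s \<longrightarrow> le s y \<longrightarrow> (\<exists>t\<in>S. le t x))"
    unfolding way_below_def by (rule refl)
  then show ?thesis unfolding flip_directed flip_is_sup .
qed

lemma is_sup_unique: assumes "poset P le" "is_sup P le S s" "is_sup P le S t" shows "s = t"
proof -
  have "s \<in> P" "t \<in> P" "le s t" "le t s" using assms(2,3) unfolding is_sup_def by blast+
  moreover have "\<forall>x\<in>P. \<forall>y\<in>P. le x y \<and> le y x \<longrightarrow> x = y" using assms(1) unfolding poset_def by blast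
  ultimately show ?thesis by blast
qed
lemma is_inf_unique: assumes "poset P le" "is_inf P le S s" "is_inf P le S t" shows "s = t"
proof -
  have "s \<in> P" "t \<in> P" "le s t" "le t s" using assms(2,3) unfolding is_inf_def by blast+
  moreover have "\<forall>x\<in>P. \<forall>y\<in>P. le x y \<and> le y x \<longrightarrow> x = y" using assms(1) unfolding poset_def by blast
  ultimately show ?thesis by blast
qed

lemma way_below_le: assumes "poset P le" "way_below P le x y" shows "le x y"
proof -
  have "directed P le {y}" "is_sup P le {y} y" "le y y"
    using assms unfolding poset_def directed_def is_sup_def way_below_def by auto
  then show ?thesis using assms(2) unfolding way_below_def by blast
qed

lemma way_below_mono_right: assumes "poset P le" "way_below P le x y" "le y z" "z \<in> P"
  shows "way_below P le x z"
  unfolding way_below_def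
proof (intro conjI allI impI)
  show "x \<in> P" "z \<in> P" using assms unfolding way_below_def by auto
  fix S s assume d: "directed P le S" and sp: "is_sup P le S s" and zs: "le z s"
  have "s \<in> P" "y \<in> P" using sp assms unfolding is_sup_def way_below_def by auto
  moreover have "\<forall>x\<in>P. \<forall>y\<in>P. \<forall>z\<in>P. le x y \<and> le y z \<longrightarrow> le x z" using assms(1) unfolding poset_def by blast
  ultimately have "le y s" using assms zs by blast
  then show "\<exists>t\<in>S. le x t" using assms(2) d sp unfolding way_below_def by blast
qed

lemma way_below_mono_left: assumes "poset P le" "way_below P le y z" "le x y" "x \<in> P"
  shows "way_below P le x z"
  unfolding way_below_def
proof (intro conjI allI impI)
  show "x \<in> P" "z \<in> P" using assms unfolding way_below_def by auto
  fix S s assume d: "directed P le S" and sp: "is_sup P le S s" and zs: "le z s"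
  obtain t where t: "t \<in> S" "le y t" using assms(2) d sp zs unfolding way_below_def by blast
  have "t \<in> P" "y \<in> P" using t d assms unfolding directed_def way_below_def by auto
  moreover have "\<forall>x\<in>P. \<forall>y\<in>P. \<forall>z\<in>P. le x y \<and> le y z \<longrightarrow> le x z" using assms(1) unfolding poset_def by blast
  ultimately have "le x t" using t assms(3,4) by blast
  then show "\<exists>t\<in>S. le x t" using t by blast
qed

lemma psup_eq: "poset P le \<Longrightarrow> is_sup P le S s \<Longrightarrow> psup P le S = s"
  unfolding psup_def by (rule the_equality) (auto intro: is_sup_unique)
lemma meet_eq: "poset P le \<Longrightarrow> is_inf P le {x,y} s \<Longrightarrow> meet P le x y = s"
  unfolding meet_def by (rule the_equality) (auto intro: is_inf_unique)

lemma meet_comm: "meet P le a b = meet P le b a"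
  unfolding meet_def by (simp add: insert_commute)

context
  fixes D :: "'a set" and le :: "'a \<Rightarrow> 'a \<Rightarrow> bool" and left right :: "'a \<Rightarrow> 'a"
  assumes ID: "interval_domain D le left right"
begin

lemma IP: "interval_poset D le left right" using conjunct1[OF ID[unfolded interval_domain_def]] .
lemma PO: "poset D le" using conjunct1[OF IP[unfolded interval_poset_def]] .
lemma CD: "continuous_dcpo D le" using conjunct1[OF conjunct2[OF ID[unfolded interval_domain_def]]] .
lemma lr_max: "x \<in> D \<Longrightarrow> left x \<in> max_elems D le \<and> right x \<in> max_elems D le"
  using conjunct1[OF conjunct2[OF IP[unfolded interval_poset_def]]] by blast
lemma inf_lr: "x \<in> D \<Longrightarrow> is_inf D le {left x, right x} x"
  using conjunct1[OF conjunct2[OF conjunct2[OF IP[unfolded interval_poset_def]]]] by blast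
lemma glue: "x \<in> D \<Longrightarrow> y \<in> D \<Longrightarrow> right x = left y \<Longrightarrow>
   \<exists>z. is_inf D le {x, y} z \<and> left z = left x \<and> right z = right y"
  using conjunct1[OF conjunct2[OF conjunct2[OF conjunct2[OF IP[unfolded interval_poset_def]]]]] by blast
lemma ax3: "x \<in> D \<Longrightarrow> p \<in> max_elems D le \<Longrightarrow> le x p \<Longrightarrow>
   (\<exists>z. is_inf D le {left x, p} z \<and> left z = left x \<and> right z = p)
 \<and> (\<exists>z. is_inf D le {p, right x} z \<and> left z = p \<and> right z = right x)"
  using conjunct2[OF conjunct2[OF conjunct2[OF conjunct2[OF IP[unfolded interval_poset_def]]]]] by blast

lemma maxD: "p \<in> max_elems D le \<Longrightarrow> p \<in> D" unfolding max_elems_def by blast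
lemma maxE: "p \<in> max_elems D le \<Longrightarrow> y \<in> D \<Longrightarrow> le p y \<Longrightarrow> y = p"
  unfolding max_elems_def by blast
lemma drefl: "x \<in> D \<Longrightarrow> le x x" using PO unfolding poset_def by blast
lemma dtrans: "x \<in> D \<Longrightarrow> y \<in> D \<Longrightarrow> z \<in> D \<Longrightarrow> le x y \<Longrightarrow> le y z \<Longrightarrow> le x z"
  using PO unfolding poset_def by blast
lemma dantisym: "x \<in> D \<Longrightarrow> y \<in> D \<Longrightarrow> le x y \<Longrightarrow> le y x \<Longrightarrow> x = y"
  using PO unfolding poset_def by blast

lemma le_left: "x \<in> D \<Longrightarrow> le x (left x)" using inf_lr unfolding is_inf_def by blast
lemma le_right: "x \<in> D \<Longrightarrow> le x (right x)" using inf_lr unfolding is_inf_def by blast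
lemma leftD: "x \<in> D \<Longrightarrow> left x \<in> D" using lr_max maxD by blast
lemma rightD: "x \<in> D \<Longrightarrow> right x \<in> D" using lr_max maxD by blast

lemma lr_of_max: assumes "p \<in> max_elems D le" shows "left p = p" "right p = p"
proof -
  have p: "p \<in> D" using assms maxD by blast
  show "left p = p" using maxE[OF assms leftD[OF p] le_left[OF p]] .
  show "right p = p" using maxE[OF assms rightD[OF p] le_right[OF p]] .
qed

lemma ileq_refl: "p \<in> max_elems D le \<Longrightarrow> ileq D left right p p"
  unfolding ileq_def using lr_of_max maxD by metis

lemma ileq_M: "ileq D left right a b \<Longrightarrow> a \<in> max_elems D le \<and> b \<in> max_elems D le"
  unfolding ileq_def using lr_max by blast

lemma ileq_lr: "x \<in> D \<Longrightarrow> ileq D left right (left x) (right x)"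
  unfolding ileq_def by blast

lemma ileq_trans: assumes "ileq D left right a b" "ileq D left right b c"
  shows "ileq D left right a c"
proof -
  obtain x y where "x \<in> D" "left x = a" "right x = b" "y \<in> D" "left y = b" "right y = c"
    using assms unfolding ileq_def by blast
  then obtain z where "is_inf D le {x, y} z" "left z = a" "right z = c" using glue by metis
  then show ?thesis unfolding ileq_def is_inf_def by blast
qed

lemma uniq: "x \<in> D \<Longrightarrow> y \<in> D \<Longrightarrow> left x = left y \<Longrightarrow> right x = right y \<Longrightarrow> x = y"
  using inf_lr is_inf_unique[OF PO] by metis

lemma le_max_iff: assumes "x \<in> D" "p \<in> max_elems D le" "le x p"
  shows "ileq D left right (left x) p" "ileq D left right p (right x)"
proof -
  obtain z where "is_inf D le {left x, p} z" "left z = left x" "right z = p"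
    using ax3[OF assms] by blast
  then show "ileq D left right (left x) p" unfolding ileq_def is_inf_def by blast
  obtain z where "is_inf D le {p, right x} z" "left z = p" "right z = right x"
    using ax3[OF assms] by blast
  then show "ileq D left right p (right x)" unfolding ileq_def is_inf_def by blast
qed

lemma max_le: assumes x: "x \<in> D" and p: "p \<in> max_elems D le"
  and a: "ileq D left right (left x) p" and b: "ileq D left right p (right x)"
  shows "le x p"
proof -
  obtain w where w: "w \<in> D" "left w = left x" "right w = p" using a unfolding ileq_def by blast
  obtain v where v: "v \<in> D" "left v = p" "right v = right x" using b unfolding ileq_def by blast
  obtain u where u: "is_inf D le {w, v} u" "left u = left x" "right u = right x"
    using glue[OF w(1) v(1)] w v by metis
  have uD: "u \<in> D" using u unfolding is_inf_def by blast
  have "u = x" using uniq[OF uD x] u by simp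
  have "le u w" using u unfolding is_inf_def by blast
  moreover have "le w p" using le_right[OF w(1)] w by simp
  ultimately show ?thesis using dtrans[OF uD w(1) maxD[OF p]] \<open>u = x\<close> by simp
qed

lemma le_iff: assumes x: "x \<in> D" and y: "y \<in> D"
  shows "le x y \<longleftrightarrow> ileq D left right (left x) (left y) \<and> ileq D left right (right y) (right x)"
proof
  assume xy: "le x y"
  have "le x (left y)" using dtrans[OF x y leftD[OF y] xy le_left[OF y]] .
  then have 1: "ileq D left right (left x) (left y)" using le_max_iff[OF x] lr_max[OF y] by blast
  have "le x (right y)" using dtrans[OF x y rightD[OF y] xy le_right[OF y]] .
  then have 2: "ileq D left right (right y) (right x)" using le_max_iff[OF x] lr_max[OF y] by blast
  show "ileq D left right (left x) (left y) \<and> ileq D left right (right y) (right x)" using 1 2 by blast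
next
  assume h: "ileq D left right (left x) (left y) \<and> ileq D left right (right y) (right x)"
  have ly: "ileq D left right (left y) (right x)" using ileq_trans[OF ileq_lr[OF y]] h by blast
  have rx: "ileq D left right (left x) (right y)" using ileq_trans[OF _ ileq_lr[OF y]] h by blast
  have 1: "le x (left y)" using max_le[OF x] lr_max[OF y] h ly by blast
  have 2: "le x (right y)" using max_le[OF x] lr_max[OF y] h rx by blast
  show "le x y" using inf_lr[OF y] x 1 2 unfolding is_inf_def by blast
qed

lemma ileq_antisym: assumes ab: "ileq D left right a b" and ba: "ileq D left right b a"
  shows "a = b"
proof -
  obtain z where z: "z \<in> D" "left z = a" "right z = b" using ab unfolding ileq_def by blast
  have aM: "a \<in> max_elems D le" and bM: "b \<in> max_elems D le" using ileq_M ab by blast+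
  have aD: "a \<in> D" and bD: "b \<in> D" using aM bM maxD by blast+
  have "le a z" using le_iff[OF aD z(1)] z lr_of_max[OF aM] ileq_refl[OF aM] ba by simp
  moreover have "le z b" using le_right[OF z(1)] z by simp
  ultimately have "le a b" using dtrans[OF aD z(1) bD] by blast
  then show ?thesis using maxE[OF aM bD] by simp
qed

lemma poset_M: "poset (max_elems D le) (ileq D left right)"
  unfolding poset_def using ileq_refl ileq_antisym ileq_trans by blast

lemma iv: assumes "ileq D left right a b"
  shows "phi_inv D left right a b \<in> D" "left (phi_inv D left right a b) = a"
        "right (phi_inv D left right a b) = b"
proof -
  obtain z where z: "z \<in> D" "left z = a" "right z = b" using assms unfolding ileq_def by blast
  have "\<exists>!z. z \<in> D \<and> left z = a \<and> right z = b"
  proof (rule ex1I[of _ z])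
    show "z \<in> D \<and> left z = a \<and> right z = b" using z by simp
    fix w assume "w \<in> D \<and> left w = a \<and> right w = b"
    then show "w = z" using uniq[of w z] z by simp
  qed
  then have "phi_inv D left right a b \<in> D \<and> left (phi_inv D left right a b) = a
        \<and> right (phi_inv D left right a b) = b"
    unfolding phi_inv_def by (rule theI')
  then show "phi_inv D left right a b \<in> D" "left (phi_inv D left right a b) = a"
        "right (phi_inv D left right a b) = b" by auto
qed

lemma iv_eq: assumes x: "x \<in> D" shows "phi_inv D left right (left x) (right x) = x"
proof -
  note h = iv[OF ileq_lr[OF x]]
  show ?thesis by (rule uniq[OF h(1) x]) (simp_all add: h)
qed

lemmas ID_i = conjunct1[OF conjunct2[OF conjunct2[OF ID[unfolded interval_domain_def]]]]
lemmas ID_ii = conjunct1[OF conjunct2[OF conjunct2[OF conjunct2[OF ID[unfolded interval_domain_def]]]]]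
lemmas ID_iiib = conjunct1[OF conjunct2[OF conjunct2[OF conjunct2[OF conjunct2[OF conjunct2[OF ID[unfolded interval_domain_def]]]]]]]
lemmas ID_iv = conjunct2[OF conjunct2[OF conjunct2[OF conjunct2[OF conjunct2[OF conjunct2[OF ID[unfolded interval_domain_def]]]]]]]

lemma psup_is: assumes "directed D le S" shows "is_sup D le S (psup D le S)"
proof -
  obtain s where "is_sup D le S s" using CD assms unfolding continuous_dcpo_def by blast
  then show ?thesis using psup_eq[OF PO] by simp
qed

end

section \<open>Duality\<close>

lemma interval_poset_dual: assumes h: "interval_poset D le left right"
  shows "interval_poset D le right left"
proof -
  have c: "\<And>a b. {a, b} = {b, a}" by auto
  note h' = h[unfolded interval_poset_def]
  have P: "poset D le" using conjunct1[OF h'] .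
  have lr: "\<forall>x\<in>D. left x \<in> max_elems D le \<and> right x \<in> max_elems D le"
    using conjunct1[OF conjunct2[OF h']] .
  have inf: "\<forall>x\<in>D. is_inf D le {left x, right x} x" using conjunct1[OF conjunct2[OF conjunct2[OF h']]] .
  have g: "\<forall>x\<in>D. \<forall>y\<in>D. right x = left y \<longrightarrow>
          (\<exists>z. is_inf D le {x, y} z \<and> left z = left x \<and> right z = right y)"
    using conjunct1[OF conjunct2[OF conjunct2[OF conjunct2[OF h']]]] .
  have a3: "\<forall>x\<in>D. \<forall>p\<in>max_elems D le. le x p \<longrightarrow>
          (\<exists>z. is_inf D le {left x, p} z \<and> left z = left x \<and> right z = p)
        \<and> (\<exists>z. is_inf D le {p, right x} z \<and> left z = p \<and> right z = right x)"
    using conjunct2[OF conjunct2[OF conjunct2[OF conjunct2[OF h']]]] .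
  have inf': "\<forall>x\<in>D. is_inf D le {right x, left x} x" using inf c by metis
  have g': "\<forall>x\<in>D. \<forall>y\<in>D. left x = right y \<longrightarrow>
          (\<exists>z. is_inf D le {x, y} z \<and> right z = right x \<and> left z = left y)"
  proof (intro ballI impI)
    fix x y assume "x \<in> D" "y \<in> D" "left x = right y"
    then obtain z where "is_inf D le {y, x} z \<and> left z = left y \<and> right z = right x"
      using g by metis
    then show "\<exists>z. is_inf D le {x, y} z \<and> right z = right x \<and> left z = left y" using c by metis
  qed
  have a3': "\<forall>x\<in>D. \<forall>p\<in>max_elems D le. le x p \<longrightarrow>
          (\<exists>z. is_inf D le {right x, p} z \<and> right z = right x \<and> left z = p)
        \<and> (\<exists>z. is_inf D le {p, left x} z \<and> right z = p \<and> left z = left x)"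
  proof (intro ballI impI conjI)
    fix x p assume "x \<in> D" "p \<in> max_elems D le" "le x p"
    then have A: "(\<exists>z. is_inf D le {left x, p} z \<and> left z = left x \<and> right z = p)"
      and B: "(\<exists>z. is_inf D le {p, right x} z \<and> left z = p \<and> right z = right x)"
      using a3 by blast+
    show "\<exists>z. is_inf D le {right x, p} z \<and> right z = right x \<and> left z = p" using B c by metis
    show "\<exists>z. is_inf D le {p, left x} z \<and> right z = p \<and> left z = left x" using A c by metis
  qed
  have lr': "\<forall>x\<in>D. right x \<in> max_elems D le \<and> left x \<in> max_elems D le" using lr by blast
  show ?thesis unfolding interval_poset_def using P lr' inf' g' a3' by (intro conjI)
qed

lemma interval_domain_dual: assumes h: "interval_domain D le left right"
  shows "interval_domain D le right left"
proof -
  note h' = h[unfolded interval_domain_def]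
  have IP': "interval_poset D le right left"
    using interval_poset_dual conjunct1[OF h'] by blast
  note p2 = conjunct1[OF conjunct2[OF h']]
  note p3 = conjunct1[OF conjunct2[OF conjunct2[OF h']]]
  note p4 = conjunct1[OF conjunct2[OF conjunct2[OF conjunct2[OF h']]]]
  note p5 = conjunct1[OF conjunct2[OF conjunct2[OF conjunct2[OF conjunct2[OF h']]]]]
  note p6 = conjunct1[OF conjunct2[OF conjunct2[OF conjunct2[OF conjunct2[OF conjunct2[OF h']]]]]]
  note p7 = conjunct2[OF conjunct2[OF conjunct2[OF conjunct2[OF conjunct2[OF conjunct2[OF h']]]]]]
  have lf: "left_fib D right = right_fib D right" "right_fib D left = left_fib D left"
    unfolding left_fib_def right_fib_def by (rule ext, simp)+
  show ?thesis
    unfolding interval_domain_def lf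
    apply (intro conjI)
          apply (rule IP')
         apply (rule p2)
    subgoal
    proof (intro ballI allI impI)
      fix x p assume "x \<in> D" "p \<in> wb_up D le x \<inter> max_elems D le"
      then have "wb_up D le (meet D le (left x) p) \<noteq> {} \<and> wb_up D le (meet D le p (right x)) \<noteq> {}"
        using p3 by blast
      then show "wb_up D le (meet D le (right x) p) \<noteq> {} \<and> wb_up D le (meet D le p (left x)) \<noteq> {}"
        using meet_comm by metis
    qed
    subgoal
    proof (rule ballI)
      fix x assume "x \<in> D"
      with p4 have c: "(wb_up D le x \<noteq> {} \<longleftrightarrow>
            (\<forall>y\<in>left_fib D left (left x). le y x \<longrightarrow>
               way_below (right_fib D right (right y)) le y (right y)))
        \<and> (wb_up D le x \<noteq> {} \<longleftrightarrow>
            (\<forall>y\<in>right_fib D right (right x). le y x \<longrightarrow>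
               way_below (left_fib D left (left y)) le y (left y)))" by (rule bspec)
      show "(wb_up D le x \<noteq> {} \<longleftrightarrow>
            (\<forall>y\<in>right_fib D right (right x). le y x \<longrightarrow>
               way_below (left_fib D left (left y)) le y (left y)))
        \<and> (wb_up D le x \<noteq> {} \<longleftrightarrow>
            (\<forall>y\<in>left_fib D left (left x). le y x \<longrightarrow>
               way_below (right_fib D right (right y)) le y (right y)))"
        using conjunct1[OF c] conjunct2[OF c] by (rule conjI[rotated])
    qed
      apply (rule p6)
     apply (rule p5)
    apply (rule p7)
    done
qed

lemma ileq_dual: "ileq D right left = (\<lambda>a b. ileq D left right b a)"
  unfolding ileq_def by (intro ext) blast

lemma phi_inv_dual: "phi_inv D right left a b = phi_inv D left right b a"
  unfolding phi_inv_def by (rule arg_cong[where f=The], rule ext) blast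



section \<open>Sups of lefts\<close>

context
  fixes D :: "'a set" and le :: "'a \<Rightarrow> 'a \<Rightarrow> bool" and left right :: "'a \<Rightarrow> 'a"
  assumes ID: "interval_domain D le left right"
begin

lemma ax3b: "q \<in> max_elems D le \<Longrightarrow> directed D le S \<Longrightarrow> S \<subseteq> right_fib D right q \<Longrightarrow>
   right (psup D le S) = q"
  using ID_iiib[OF ID] by blast

lemma ax3b2: assumes a: "q \<in> max_elems D le" "directed D le S" "S \<subseteq> right_fib D right q"
   "p \<in> max_elems D le" "directed D le T" "T \<subseteq> right_fib D right p" "left ` T = left ` S"
  shows "left (psup D le S) = left (psup D le T)"
proof -
  have "\<forall>p\<in>max_elems D le. \<forall>T. directed D le T \<and> T \<subseteq> right_fib D right p
               \<and> left ` T = left ` S \<longrightarrow> left (psup D le S) = left (psup D le T)"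
    using ID_iiib[OF ID] a(1-3) by blast
  then show ?thesis using a(4-7) by blast
qed

lemma le_iv: assumes "ileq D left right a b" "ileq D left right c d"
  shows "le (phi_inv D left right a b) (phi_inv D left right c d) \<longleftrightarrow>
     ileq D left right a c \<and> ileq D left right d b"
proof -
  note h1 = iv[OF ID assms(1)] and h2 = iv[OF ID assms(2)]
  show ?thesis using le_iff[OF ID h1(1) h2(1)] h1(2,3) h2(2,3) by simp
qed

lemma le_iv_max: assumes "ileq D left right a b" "p \<in> max_elems D le"
  shows "le (phi_inv D left right a b) p \<longleftrightarrow> ileq D left right a p \<and> ileq D left right p b"
proof -
  note h1 = iv[OF ID assms(1)]
  have pD: "p \<in> D" using maxD[OF ID assms(2)] .
  show ?thesis using le_iff[OF ID h1(1) pD] h1(2,3) lr_of_max[OF ID assms(2)] by simp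
qed

lemma directed_left: assumes "directed D le S"
  shows "directed (max_elems D le) (ileq D left right) (left ` S)"
proof -
  have SD: "S \<subseteq> D" using assms unfolding directed_def by blast
  show ?thesis unfolding directed_def
  proof (intro conjI ballI)
    show "left ` S \<subseteq> max_elems D le" using SD lr_max[OF ID] by blast
    show "left ` S \<noteq> {}" using assms unfolding directed_def by blast
    fix x y assume "x \<in> left ` S" "y \<in> left ` S"
    then obtain t1 t2 where t: "t1 \<in> S" "t2 \<in> S" "x = left t1" "y = left t2" by blast
    then obtain t3 where t3: "t3 \<in> S" "le t1 t3" "le t2 t3" using assms unfolding directed_def by blast
    have D3: "t1 \<in> D" "t2 \<in> D" "t3 \<in> D" using t t3 SD by blast+
    have "ileq D left right x (left t3)" using le_iff[OF ID D3(1) D3(3)] t3(2) t(3) by simp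
    moreover have "ileq D left right y (left t3)" using le_iff[OF ID D3(2) D3(3)] t3(3) t(4) by simp
    ultimately show "\<exists>z\<in>left ` S. ileq D left right x z \<and> ileq D left right y z" using t3 by blast
  qed
qed

lemma M1: assumes dS: "directed D le S"
  shows "is_sup (max_elems D le) (ileq D left right) (left ` S) (left (psup D le S))"
proof -
  define s where "s = psup D le S"
  have sp: "is_sup D le S s" using psup_is[OF ID dS] s_def by simp
  have sD: "s \<in> D" using sp unfolding is_sup_def by blast
  have SD: "S \<subseteq> D" using dS unfolding directed_def by blast
  have up: "ileq D left right (left t) (left s) \<and> ileq D left right (right s) (right t)" if t: "t \<in> S" for t
  proof -
    have "t \<in> D" "le t s" using t SD sp unfolding is_sup_def by blast+
    then show ?thesis using le_iff[OF ID _ sD] by blast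
  qed
  define r where "r = right s"
  have rM: "r \<in> max_elems D le" using lr_max[OF ID sD] r_def by blast
  have rr: "ileq D left right r r" using ileq_refl[OF ID rM] .
  show ?thesis unfolding s_def[symmetric] is_sup_def
  proof (intro conjI ballI impI)
    show "left s \<in> max_elems D le" using lr_max[OF ID sD] by blast
    show "\<And>x. x \<in> left ` S \<Longrightarrow> ileq D left right x (left s)" using up by blast
    fix u assume uM: "u \<in> max_elems D le" and ub: "\<forall>x\<in>left ` S. ileq D left right x u"
    have uu: "ileq D left right u u" using ileq_refl[OF ID uM] .
    have ltr: "ileq D left right (left t) r" if t: "t \<in> S" for t
      using ileq_trans[OF ID conjunct1[OF up[OF t]] ileq_lr[OF ID sD]] r_def by simp
    have ltu: "ileq D left right (left t) u" if t: "t \<in> S" for t using ub t by blast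
    define S' where "S' = (\<lambda>t. phi_inv D left right (left t) r) ` S"
    define T where "T = (\<lambda>t. phi_inv D left right (left t) u) ` S"
    have dS': "directed D le S'" unfolding directed_def
    proof (intro conjI ballI)
      show "S' \<subseteq> D" unfolding S'_def using iv(1)[OF ID ltr] by blast
      show "S' \<noteq> {}" unfolding S'_def using dS unfolding directed_def by blast
      fix x y assume "x \<in> S'" "y \<in> S'"
      then obtain t1 t2 where t: "t1 \<in> S" "t2 \<in> S" "x = phi_inv D left right (left t1) r"
        "y = phi_inv D left right (left t2) r" unfolding S'_def by blast
      then obtain t3 where t3: "t3 \<in> S" "le t1 t3" "le t2 t3" using dS unfolding directed_def by blast
      have D3: "t1 \<in> D" "t2 \<in> D" "t3 \<in> D" using t t3 SD by blast+
      have l1: "ileq D left right (left t1) (left t3)" using le_iff[OF ID D3(1) D3(3)] t3(2) by simp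
      have l2: "ileq D left right (left t2) (left t3)" using le_iff[OF ID D3(2) D3(3)] t3(3) by simp
      have "le x (phi_inv D left right (left t3) r)"
        using le_iv[OF ltr[OF t(1)] ltr[OF t3(1)]] l1 rr t(3) by simp
      moreover have "le y (phi_inv D left right (left t3) r)"
        using le_iv[OF ltr[OF t(2)] ltr[OF t3(1)]] l2 rr t(4) by simp
      ultimately show "\<exists>z\<in>S'. le x z \<and> le y z" using t3 unfolding S'_def by blast
    qed
    have dT: "directed D le T" unfolding directed_def
    proof (intro conjI ballI)
      show "T \<subseteq> D" unfolding T_def using iv(1)[OF ID ltu] by blast
      show "T \<noteq> {}" unfolding T_def using dS unfolding directed_def by blast
      fix x y assume "x \<in> T" "y \<in> T"
      then obtain t1 t2 where t: "t1 \<in> S" "t2 \<in> S" "x = phi_inv D left right (left t1) u"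
        "y = phi_inv D left right (left t2) u" unfolding T_def by blast
      then obtain t3 where t3: "t3 \<in> S" "le t1 t3" "le t2 t3" using dS unfolding directed_def by blast
      have D3: "t1 \<in> D" "t2 \<in> D" "t3 \<in> D" using t t3 SD by blast+
      have l1: "ileq D left right (left t1) (left t3)" using le_iff[OF ID D3(1) D3(3)] t3(2) by simp
      have l2: "ileq D left right (left t2) (left t3)" using le_iff[OF ID D3(2) D3(3)] t3(3) by simp
      have "le x (phi_inv D left right (left t3) u)"
        using le_iv[OF ltu[OF t(1)] ltu[OF t3(1)]] l1 uu t(3) by simp
      moreover have "le y (phi_inv D left right (left t3) u)"
        using le_iv[OF ltu[OF t(2)] ltu[OF t3(1)]] l2 uu t(4) by simp
      ultimately show "\<exists>z\<in>T. le x z \<and> le y z" using t3 unfolding T_def by blast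
    qed
    have S'f: "S' \<subseteq> right_fib D right r" unfolding S'_def right_fib_def
      using iv(1,3)[OF ID ltr] by blast
    have Tf: "T \<subseteq> right_fib D right u" unfolding T_def right_fib_def using iv(1,3)[OF ID ltu] by blast
    have im: "left ` T = left ` S'" unfolding T_def S'_def image_image
      using iv(2)[OF ID ltr] iv(2)[OF ID ltu] by (intro image_cong) auto
    have eq1: "left (psup D le S') = left (psup D le T)" using ax3b2[OF rM dS' S'f uM dT Tf im] .
    have eq2: "right (psup D le T) = u" using ax3b[OF uM dT Tf] .
    have "is_sup D le S' s" unfolding is_sup_def
    proof (intro conjI ballI impI)
      show "s \<in> D" by fact
      fix x assume "x \<in> S'"
      then obtain t where t: "t \<in> S" "x = phi_inv D left right (left t) r" unfolding S'_def by blast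
      have "ileq D left right (left t) (left s)" using up[OF t(1)] by blast
      then show "le x s" using le_iff[OF ID iv(1)[OF ID ltr[OF t(1)]] sD] iv(2,3)[OF ID ltr[OF t(1)]] t(2) rr r_def
        by simp
    next
      fix v assume vD: "v \<in> D" and vub: "\<forall>x\<in>S'. le x v"
      have "\<forall>t\<in>S. le t v"
      proof
        fix t assume t: "t \<in> S"
        have tD: "t \<in> D" using t SD by blast
        note ivt = iv[OF ID ltr[OF t]]
        have tM: "left t \<in> max_elems D le" using lr_max[OF ID tD] by blast
        have "le t (phi_inv D left right (left t) r)"
          using le_iff[OF ID tD ivt(1)] ivt(2,3) up[OF t] r_def ileq_refl[OF ID tM] by simp
        moreover have "le (phi_inv D left right (left t) r) v" using vub t unfolding S'_def by blast
        ultimately show "le t v" using dtrans[OF ID tD ivt(1) vD] by blast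
      qed
      then show "le s v" using sp vD unfolding is_sup_def by blast
    qed
    then have "psup D le S' = s" using psup_eq[OF PO[OF ID]] by blast
    moreover have "psup D le T \<in> D" using psup_is[OF ID dT] unfolding is_sup_def by blast
    ultimately show "ileq D left right (left s) u" unfolding ileq_def using eq1 eq2 by metis
  qed
qed


section \<open>Way-below in max(D)\<close>


lemma ax2b: "x \<in> D \<Longrightarrow> (wb_up D le x \<noteq> {}) \<longleftrightarrow>
  (\<forall>y\<in>left_fib D left (left x). le y x \<longrightarrow> way_below (right_fib D right (right y)) le y (right y))"
  using ID_ii[OF ID] by blast

lemma ax1: "x \<in> D \<Longrightarrow> p \<in> wb_up D le x \<Longrightarrow> p \<in> max_elems D le \<Longrightarrow>
   wb_up D le (meet D le (left x) p) \<noteq> {}"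
  using ID_i[OF ID] by blast

lemma WB: assumes ab: "ileq D left right a b"
  shows "wb_up D le (phi_inv D left right a b) \<noteq> {} \<longleftrightarrow> way_below (max_elems D le) (ileq D left right) a b"
proof -
  define x where "x = phi_inv D left right a b"
  have x: "x \<in> D" "left x = a" "right x = b" using iv[OF ID ab] x_def by auto
  have aM: "a \<in> max_elems D le" and bM: "b \<in> max_elems D le" using ileq_M[OF ID ab] by auto
  have "wb_up D le x \<noteq> {} \<longleftrightarrow>
     (\<forall>y\<in>left_fib D left a. le y x \<longrightarrow> way_below (right_fib D right (right y)) le y (right y))"
    using ax2b[OF x(1)] x(2) by simp
  also have "\<dots> \<longleftrightarrow> way_below (max_elems D le) (ileq D left right) a b"
  proof
    assume R: "\<forall>y\<in>left_fib D left a. le y x \<longrightarrow> way_below (right_fib D right (right y)) le y (right y)"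
    show "way_below (max_elems D le) (ileq D left right) a b" unfolding way_below_def
    proof (intro conjI allI impI)
      show "a \<in> max_elems D le" "b \<in> max_elems D le" by fact+
      fix S s assume dS: "directed (max_elems D le) (ileq D left right) S"
        and sS: "is_sup (max_elems D le) (ileq D left right) S s" and bs: "ileq D left right b s"
      have sM: "s \<in> max_elems D le" using sS unfolding is_sup_def by blast
      have sD: "s \<in> D" using maxD[OF ID sM] .
      have ss: "ileq D left right s s" using ileq_refl[OF ID sM] .
      have as: "ileq D left right a s" using ileq_trans[OF ID ab bs] .
      define y where "y = phi_inv D left right a s"
      have y: "y \<in> D" "left y = a" "right y = s" using iv[OF ID as] y_def by auto
      have yl: "y \<in> left_fib D left a" using y unfolding left_fib_def by blast
      have yx: "le y x" using le_iv[OF as ab] ileq_refl[OF ID aM] bs y_def x_def by simp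
      have W: "way_below (right_fib D right s) le y s" using R yl yx y(3) by blast
      have zs: "ileq D left right z s" if "z \<in> S" for z using sS that unfolding is_sup_def by blast
      define T where "T = (\<lambda>z. phi_inv D left right z s) ` S"
      have ssf: "s \<in> right_fib D right s" unfolding right_fib_def using sD lr_of_max[OF ID sM] by simp
      have dT: "directed (right_fib D right s) le T" unfolding directed_def
      proof (intro conjI ballI)
        show "T \<subseteq> right_fib D right s" unfolding T_def right_fib_def using iv(1,3)[OF ID zs] by blast
        show "T \<noteq> {}" unfolding T_def using dS unfolding directed_def by blast
        fix u v assume "u \<in> T" "v \<in> T"
        then obtain z1 z2 where z: "z1 \<in> S" "z2 \<in> S" "u = phi_inv D left right z1 s"
          "v = phi_inv D left right z2 s" unfolding T_def by blast
        then obtain z3 where z3: "z3 \<in> S" "ileq D left right z1 z3" "ileq D left right z2 z3"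
          using dS unfolding directed_def by blast
        have "le u (phi_inv D left right z3 s)"
          using le_iv[OF zs[OF z(1)] zs[OF z3(1)]] z(3) z3(2) ss by simp
        moreover have "le v (phi_inv D left right z3 s)"
          using le_iv[OF zs[OF z(2)] zs[OF z3(1)]] z(4) z3(3) ss by simp
        ultimately show "\<exists>w\<in>T. le u w \<and> le v w" using z3 unfolding T_def by blast
      qed
      have sT: "is_sup (right_fib D right s) le T s" unfolding is_sup_def
      proof (intro conjI ballI impI)
        show "s \<in> right_fib D right s" by fact
        fix u assume "u \<in> T"
        then obtain z where z: "z \<in> S" "u = phi_inv D left right z s" unfolding T_def by blast
        show "le u s" using le_iv_max[OF zs[OF z(1)] sM] z(2) zs[OF z(1)] ss by simp
      next
        fix u assume uf: "u \<in> right_fib D right s" and ub: "\<forall>w\<in>T. le w u"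
        have uD: "u \<in> D" and ru: "right u = s" using uf unfolding right_fib_def by auto
        have "\<forall>z\<in>S. ileq D left right z (left u)"
        proof
          fix z assume z: "z \<in> S"
          have "le (phi_inv D left right z s) u" using ub z unfolding T_def by blast
          then show "ileq D left right z (left u)"
            using le_iff[OF ID iv(1)[OF ID zs[OF z]] uD] iv(2)[OF ID zs[OF z]] by simp
        qed
        then have "ileq D left right s (left u)" using sS lr_max[OF ID uD] unfolding is_sup_def by blast
        moreover have "ileq D left right (left u) s" using ileq_lr[OF ID uD] ru by simp
        ultimately have "left u = s" using ileq_antisym[OF ID] by blast
        then have "u = s" using uniq[OF ID uD sD] ru lr_of_max[OF ID sM] by simp
        then show "le s u" using drefl[OF ID sD] by simp
      qed
      obtain t where t: "t \<in> T" "le y t" using W dT sT drefl[OF ID sD] unfolding way_below_def by blast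
      then obtain z where z: "z \<in> S" "t = phi_inv D left right z s" unfolding T_def by blast
      have "ileq D left right a z" using le_iv[OF as zs[OF z(1)]] t(2) z(2) y_def by simp
      then show "\<exists>t\<in>S. ileq D left right a t" using z by blast
    qed
  next
    assume W: "way_below (max_elems D le) (ileq D left right) a b"
    show "\<forall>y\<in>left_fib D left a. le y x \<longrightarrow> way_below (right_fib D right (right y)) le y (right y)"
    proof (intro ballI impI)
      fix y assume yl: "y \<in> left_fib D left a" and yx: "le y x"
      have yD: "y \<in> D" and ly: "left y = a" using yl unfolding left_fib_def by auto
      define c where "c = right y"
      have cM: "c \<in> max_elems D le" using lr_max[OF ID yD] c_def by blast
      have cD: "c \<in> D" using maxD[OF ID cM] .
      have cc: "ileq D left right c c" using ileq_refl[OF ID cM] .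
      have bc: "ileq D left right b c" using le_iff[OF ID yD x(1)] yx x c_def by simp
      show "way_below (right_fib D right (right y)) le y (right y)"
        unfolding c_def[symmetric] way_below_def
      proof (intro conjI allI impI)
        show "y \<in> right_fib D right c" unfolding right_fib_def c_def using yD by simp
        show cf: "c \<in> right_fib D right c" unfolding right_fib_def using cD lr_of_max[OF ID cM] by simp
        fix T s assume dT: "directed (right_fib D right c) le T" and sT: "is_sup (right_fib D right c) le T s"
          and cs: "le c s"
        have Tf: "T \<subseteq> right_fib D right c" using dT unfolding directed_def by blast
        have fD: "right_fib D right c \<subseteq> D" unfolding right_fib_def by blast
        have sf: "s \<in> right_fib D right c" using sT unfolding is_sup_def by blast
        have sD: "s \<in> D" using sf fD by blast
        have sc: "s = c" using maxE[OF ID cM sD cs] .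
        have dT': "directed D le T" using dT fD unfolding directed_def by blast
        define s' where "s' = psup D le T"
        have s'sup: "is_sup D le T s'" using psup_is[OF ID dT'] s'_def by simp
        have s'D: "s' \<in> D" using s'sup unfolding is_sup_def by blast
        have rs': "right s' = c" using ax3b[OF cM dT' Tf] s'_def by simp
        have s'f: "s' \<in> right_fib D right c" unfolding right_fib_def using s'D rs' by simp
        have "le s s'" using sT s'f s'sup unfolding is_sup_def by blast
        moreover have "le s' s" using sT s'sup sD unfolding is_sup_def by blast
        ultimately have "s' = c" using dantisym[OF ID sD s'D] sc by simp
        then have "is_sup (max_elems D le) (ileq D left right) (left ` T) c"
          using M1[OF dT'] s'_def lr_of_max[OF ID cM] by simp
        then obtain z where z: "z \<in> left ` T" "ileq D left right a z"
          using W directed_left[OF dT'] bc unfolding way_below_def by blast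
        then obtain t where t: "t \<in> T" "z = left t" by blast
        have tD: "t \<in> D" and rt: "right t = c" using t Tf unfolding right_fib_def by auto
        have "le y t" using le_iff[OF ID yD tD] ly z t rt c_def cc by simp
        then show "\<exists>t\<in>T. le y t" using t by blast
      qed
    qed
  qed
  finally show ?thesis unfolding x_def .
qed

lemma A2: assumes xD: "x \<in> D" and pM: "p \<in> max_elems D le" and wb: "way_below D le x p"
  shows "way_below (max_elems D le) (ileq D left right) (left x) p"
proof -
  have xp: "le x p" using way_below_le[OF PO[OF ID] wb] .
  have "p \<in> wb_up D le x" using wb unfolding wb_up_def way_below_def by blast
  then have ne: "wb_up D le (meet D le (left x) p) \<noteq> {}" using ax1[OF xD _ pM] by blast
  obtain z where z: "is_inf D le {left x, p} z" "left z = left x" "right z = p"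
    using ax3[OF ID xD pM xp] by blast
  have zD: "z \<in> D" using z unfolding is_inf_def by blast
  have m: "meet D le (left x) p = z" using meet_eq[OF PO[OF ID] z(1)] .
  have lp: "ileq D left right (left x) p" unfolding ileq_def using zD z by blast
  note h = iv[OF ID lp]
  have "phi_inv D left right (left x) p = z" using uniq[OF ID h(1) zD] h(2,3) z(2,3) by simp
  then show ?thesis using WB[OF lp] ne m by simp
qed

end



section \<open>Interpolation in continuous posets\<close>

lemma interpolate: assumes cp: "continuous_poset P le" and xy: "way_below P le x y"
  shows "\<exists>w. way_below P le x w \<and> way_below P le w y"
proof -
  have po: "poset P le" using cp unfolding continuous_poset_def by blast
  obtain B where B: "B \<subseteq> P" "\<forall>x\<in>P. \<exists>S. S \<subseteq> B \<inter> wb_down P le x \<and> directed P le S \<and> is_sup P le S x"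
    using cp unfolding continuous_poset_def by blast
  define Sf where "Sf z = (SOME S. S \<subseteq> B \<inter> wb_down P le z \<and> directed P le S \<and> is_sup P le S z)" for z
  have Sf: "Sf z \<subseteq> B \<inter> wb_down P le z \<and> directed P le (Sf z) \<and> is_sup P le (Sf z) z" if "z \<in> P" for z
  proof -
    have ex: "\<exists>S. S \<subseteq> B \<inter> wb_down P le z \<and> directed P le S \<and> is_sup P le S z" using B(2) that by blast
    show ?thesis unfolding Sf_def using someI_ex[OF ex] .
  qed
  have yP: "y \<in> P" and xP: "x \<in> P" using xy unfolding way_below_def by blast+
  have reflP: "le u u" if "u \<in> P" for u using po that unfolding poset_def by blast
  have transP: "le u w" if "u \<in> P" "v \<in> P" "w \<in> P" "le u v" "le v w" for u v w
  proof -
    have "\<forall>x\<in>P. \<forall>y\<in>P. \<forall>z\<in>P. le x y \<and> le y z \<longrightarrow> le x z" using po unfolding poset_def by blast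
    then show ?thesis using that by blast
  qed
  define Sy where "Sy = Sf y"
  have Sy: "Sy \<subseteq> wb_down P le y" "directed P le Sy" "is_sup P le Sy y" using Sf[OF yP] Sy_def by auto
  have SyP: "Sy \<subseteq> P" using Sy(2) unfolding directed_def by blast
  define T where "T = \<Union> (Sf ` Sy)"
  have SfP: "Sf z \<subseteq> P" if "z \<in> Sy" for z
  proof -
    have "z \<in> P" using SyP that by blast
    then have "directed P le (Sf z)" using Sf by blast
    then show ?thesis unfolding directed_def by blast
  qed
  have dT: "directed P le T" unfolding directed_def
  proof (intro conjI ballI)
    show "T \<subseteq> P" unfolding T_def using SfP by blast
    obtain z where z: "z \<in> Sy" using Sy(2) unfolding directed_def by blast
    then have "z \<in> P" using SyP by blast
    then have "directed P le (Sf z)" using Sf by blast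
    then have "Sf z \<noteq> {}" unfolding directed_def by blast
    then show "T \<noteq> {}" unfolding T_def using z by blast
    fix w1 w2 assume "w1 \<in> T" "w2 \<in> T"
    then obtain z1 z2 where z: "z1 \<in> Sy" "z2 \<in> Sy" "w1 \<in> Sf z1" "w2 \<in> Sf z2" unfolding T_def by blast
    obtain z3 where z3: "z3 \<in> Sy" "le z1 z3" "le z2 z3" using Sy(2) z unfolding directed_def by blast
    have z3P: "z3 \<in> P" using z3 SyP by blast
    have S3: "directed P le (Sf z3)" "is_sup P le (Sf z3) z3" using Sf[OF z3P] by auto
    have z12: "z1 \<in> P" "z2 \<in> P" using z SyP by blast+
    have w1: "way_below P le w1 z1" using Sf[OF z12(1)] z unfolding wb_down_def by blast
    have w2: "way_below P le w2 z2" using Sf[OF z12(2)] z unfolding wb_down_def by blast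
    have "way_below P le w1 z3" using way_below_mono_right[OF po w1 z3(2) z3P] .
    then obtain t1 where t1: "t1 \<in> Sf z3" "le w1 t1" using S3 reflP[OF z3P] unfolding way_below_def by blast
    have "way_below P le w2 z3" using way_below_mono_right[OF po w2 z3(3) z3P] .
    then obtain t2 where t2: "t2 \<in> Sf z3" "le w2 t2" using S3 reflP[OF z3P] unfolding way_below_def by blast
    obtain t3 where t3: "t3 \<in> Sf z3" "le t1 t3" "le t2 t3" using S3(1) t1 t2 unfolding directed_def by blast
    have P3: "t1 \<in> P" "t2 \<in> P" "t3 \<in> P" "w1 \<in> P" "w2 \<in> P" using SfP t1 t2 t3 z z3 by blast+
    have "le w1 t3" using transP[OF P3(4) P3(1) P3(3) t1(2) t3(2)] .
    moreover have "le w2 t3" using transP[OF P3(5) P3(2) P3(3) t2(2) t3(3)] .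
    ultimately show "\<exists>t\<in>T. le w1 t \<and> le w2 t" using t3 z3 unfolding T_def by blast
  qed
  have sT: "is_sup P le T y" unfolding is_sup_def
  proof (intro conjI ballI impI)
    show "y \<in> P" by fact
    fix w assume "w \<in> T"
    then obtain z where z: "z \<in> Sy" "w \<in> Sf z" unfolding T_def by blast
    have zP: "z \<in> P" using z SyP by blast
    have wbz: "way_below P le w z" using Sf[OF zP] z unfolding wb_down_def by blast
    have wz: "le w z" "w \<in> P" using way_below_le[OF po wbz] wbz unfolding way_below_def by blast+
    have "way_below P le z y" using Sy(1) z unfolding wb_down_def by blast
    then have "le z y" using way_below_le[OF po] by blast
    then show "le w y" using transP[OF wz(2) zP yP wz(1)] by blast
  next
    fix u assume uP: "u \<in> P" and ub: "\<forall>w\<in>T. le w u"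
    have "\<forall>z\<in>Sy. le z u"
    proof
      fix z assume z: "z \<in> Sy"
      have zP: "z \<in> P" using z SyP by blast
      have "\<forall>w\<in>Sf z. le w u" using ub z unfolding T_def by blast
      then show "le z u" using Sf[OF zP] uP unfolding is_sup_def by blast
    qed
    then show "le y u" using Sy(3) uP unfolding is_sup_def by blast
  qed
  obtain w where w: "w \<in> T" "le x w" using xy dT sT reflP[OF yP] unfolding way_below_def by blast
  then obtain z where z: "z \<in> Sy" "w \<in> Sf z" unfolding T_def by blast
  have zP: "z \<in> P" using z SyP by blast
  have wz: "way_below P le w z" using Sf[OF zP] z unfolding wb_down_def by blast
  have "way_below P le x z" using way_below_mono_left[OF po wz w(2) xP] .
  moreover have "way_below P le z y" using Sy(1) z unfolding wb_down_def by blast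
  ultimately show ?thesis by blast
qed

lemma scott_open_wb_up: assumes cp: "continuous_poset P le"
  shows "scott_open P le (wb_up P le x)"
  unfolding scott_open_def
proof (intro conjI ballI allI impI)
  have po: "poset P le" using cp unfolding continuous_poset_def by blast
  show "wb_up P le x \<subseteq> P" unfolding wb_up_def by blast
  show "y \<in> wb_up P le x" if "a \<in> wb_up P le x" "y \<in> P" "le a y" for a y
  proof -
    have "way_below P le x a" using that(1) unfolding wb_up_def by blast
    then have "way_below P le x y" using way_below_mono_right[OF po _ that(3) that(2)] by blast
    then show ?thesis using that(2) unfolding wb_up_def by blast
  qed
  fix S s assume dS: "directed P le S" and sS: "is_sup P le S s" and s: "s \<in> wb_up P le x"
  have sP: "s \<in> P" using sS unfolding is_sup_def by blast
  have reflP: "le s s" using po sP unfolding poset_def by blast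
  obtain w where w: "way_below P le x w" "way_below P le w s" using interpolate[OF cp] s
    unfolding wb_up_def by blast
  obtain t where t: "t \<in> S" "le w t" using w(2) dS sS reflP unfolding way_below_def by blast
  have tP: "t \<in> P" using t dS unfolding directed_def by blast
  have "way_below P le x t" using way_below_mono_right[OF po w(1) t(2) tP] .
  then show "S \<inter> wb_up P le x \<noteq> {}" using t tP unfolding wb_up_def by blast
qed



section \<open>Dual facts and bicontinuity\<close>

context
  fixes D :: "'a set" and le :: "'a \<Rightarrow> 'a \<Rightarrow> bool" and left right :: "'a \<Rightarrow> 'a"
  assumes ID: "interval_domain D le left right"
begin

lemma IDd: "interval_domain D le right left" using interval_domain_dual[OF ID] .

lemma ileqd: "ileq D right left = (\<lambda>a b. ileq D left right b a)"
  using ileq_dual[where D=D and left=left and right=right] .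

lemma phi_invd: "phi_inv D right left a b = phi_inv D left right b a"
  using phi_inv_dual[where D=D and left=left and right=right] .

lemma M1d: assumes dS: "directed D le S"
  shows "is_inf (max_elems D le) (ileq D left right) (right ` S) (right (psup D le S))"
proof -
  have "is_sup (max_elems D le) (ileq D right left) (right ` S) (right (psup D le S))"
    using M1[OF IDd dS] .
  then show ?thesis unfolding ileqd flip_is_sup .
qed

lemma filtered_right: assumes dS: "directed D le S"
  shows "filtered (max_elems D le) (ileq D left right) (right ` S)"
proof -
  have "directed (max_elems D le) (ileq D right left) (right ` S)" using directed_left[OF IDd dS] .
  then show ?thesis unfolding ileqd flip_directed .
qed

lemma WBd: assumes ab: "ileq D left right a b"
  shows "wb_up D le (phi_inv D left right a b) \<noteq> {} \<longleftrightarrow>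
     way_below (max_elems D le) (\<lambda>x y. ileq D left right y x) b a"
proof -
  have h: "ileq D right left b a" unfolding ileqd using ab .
  show ?thesis using WB[OF IDd h] unfolding ileqd phi_invd .
qed

lemma A2d: assumes xD: "x \<in> D" and pM: "p \<in> max_elems D le" and wb: "way_below D le x p"
  shows "way_below (max_elems D le) (\<lambda>x y. ileq D left right y x) (right x) p"
  using A2[OF IDd xD pM wb] unfolding ileqd .

lemma poset_Md: "poset (max_elems D le) (\<lambda>x y. ileq D left right y x)"
  using iffD2[OF flip_poset poset_M[OF ID]] .

lemma wbM_iff: assumes aM: "a \<in> max_elems D le" and bM: "b \<in> max_elems D le"
  shows "way_below (max_elems D le) (ileq D left right) a b \<longleftrightarrow>
         way_below (max_elems D le) (\<lambda>x y. ileq D left right y x) b a"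
proof (cases "ileq D left right a b")
  case True
  show ?thesis using WB[OF ID True] WBd[OF True] by simp
next
  case False
  have 1: "\<not> way_below (max_elems D le) (ileq D left right) a b"
    using way_below_le[OF poset_M[OF ID]] False by blast
  have 2: "\<not> way_below (max_elems D le) (\<lambda>x y. ileq D left right y x) b a"
  proof
    assume "way_below (max_elems D le) (\<lambda>x y. ileq D left right y x) b a"
    then have "(\<lambda>x y. ileq D left right y x) b a" using way_below_le[OF poset_Md] by blast
    then show False using False by simp
  qed
  show ?thesis using 1 2 by blast
qed

lemma wbM_filter: assumes pb: "way_below (max_elems D le) (ileq D left right) p b"
  and F: "filtered (max_elems D le) (ileq D left right) F" and i: "is_inf (max_elems D le) (ileq D left right) F i"
  and ip: "ileq D left right i p"
  shows "\<exists>t\<in>F. ileq D left right t b"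
proof -
  have pM: "p \<in> max_elems D le" and bM: "b \<in> max_elems D le" using pb unfolding way_below_def by blast+
  have "way_below (max_elems D le) (\<lambda>x y. ileq D left right y x) b p" using wbM_iff[OF pM bM] pb by blast
  then have "\<forall>S s. filtered (max_elems D le) (ileq D left right) S \<longrightarrow>
      is_inf (max_elems D le) (ileq D left right) S s \<longrightarrow> ileq D left right s p \<longrightarrow>
      (\<exists>t\<in>S. ileq D left right t b)"
    unfolding flip_way_below by blast
  then show ?thesis using F i ip by blast
qed

lemma approx: assumes pD: "p \<in> D"
  shows "\<exists>S. S \<subseteq> wb_down D le p \<and> directed D le S \<and> is_sup D le S p"
proof -
  have "continuous_poset D le" using CD[OF ID] unfolding continuous_dcpo_def by blast
  then obtain B where "\<forall>x\<in>D. \<exists>S. S \<subseteq> B \<inter> wb_down D le x \<and> directed D le S \<and> is_sup D le S x"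
    unfolding continuous_poset_def by blast
  then obtain S where "S \<subseteq> B \<inter> wb_down D le p" "directed D le S" "is_sup D le S p" using pD by blast
  then show ?thesis by blast
qed

lemma approx_M: assumes pM: "p \<in> max_elems D le"
  obtains S where "S \<subseteq> wb_down D le p" "directed D le S" "psup D le S = p"
    "left ` S \<subseteq> wb_down (max_elems D le) (ileq D left right) p"
    "right ` S \<subseteq> wb_up (max_elems D le) (ileq D left right) p"
proof -
  have pD: "p \<in> D" using maxD[OF ID pM] .
  obtain S where S: "S \<subseteq> wb_down D le p" "directed D le S" "is_sup D le S p" using approx[OF pD] by blast
  have ps: "psup D le S = p" using psup_eq[OF PO[OF ID] S(3)] .
  have l: "left ` S \<subseteq> wb_down (max_elems D le) (ileq D left right) p"
  proof
    fix z assume "z \<in> left ` S"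
    then obtain x where x: "x \<in> S" "z = left x" by blast
    have wb: "way_below D le x p" and xD: "x \<in> D" using S(1) x unfolding wb_down_def by blast+
    have "way_below (max_elems D le) (ileq D left right) (left x) p" using A2[OF ID xD pM wb] .
    then show "z \<in> wb_down (max_elems D le) (ileq D left right) p"
      using x lr_max[OF ID xD] unfolding wb_down_def by blast
  qed
  have r: "right ` S \<subseteq> wb_up (max_elems D le) (ileq D left right) p"
  proof
    fix z assume "z \<in> right ` S"
    then obtain x where x: "x \<in> S" "z = right x" by blast
    have wb: "way_below D le x p" and xD: "x \<in> D" using S(1) x unfolding wb_down_def by blast+
    have rM: "right x \<in> max_elems D le" using lr_max[OF ID xD] by blast
    have "way_below (max_elems D le) (\<lambda>x y. ileq D left right y x) (right x) p" using A2d[OF xD pM wb] .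
    then have "way_below (max_elems D le) (ileq D left right) p (right x)" using wbM_iff[OF pM rM] by blast
    then show "z \<in> wb_up (max_elems D le) (ileq D left right) p"
      using x rM unfolding wb_up_def by blast
  qed
  show ?thesis by (rule that[OF S(1) S(2) ps l r])
qed

lemma cont_M_aux: assumes pM: "p \<in> max_elems D le"
  shows "\<exists>S. S \<subseteq> max_elems D le \<inter> wb_down (max_elems D le) (ileq D left right) p \<and>
      directed (max_elems D le) (ileq D left right) S \<and> is_sup (max_elems D le) (ileq D left right) S p"
proof -
  obtain S where S: "S \<subseteq> wb_down D le p" "directed D le S" "psup D le S = p"
    "left ` S \<subseteq> wb_down (max_elems D le) (ileq D left right) p"
    "right ` S \<subseteq> wb_up (max_elems D le) (ileq D left right) p" by (rule approx_M[OF pM])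
  have 1: "is_sup (max_elems D le) (ileq D left right) (left ` S) p"
    using M1[OF ID S(2)] S(3) lr_of_max[OF ID pM] by simp
  have 2: "left ` S \<subseteq> max_elems D le \<inter> wb_down (max_elems D le) (ileq D left right) p"
    using S(4) unfolding wb_down_def by blast
  have 3: "directed (max_elems D le) (ileq D left right) (left ` S)" using directed_left[OF ID S(2)] .
  show ?thesis
  proof (rule exI[of _ "left ` S"])
    show "left ` S \<subseteq> max_elems D le \<inter> wb_down (max_elems D le) (ileq D left right) p \<and>
    directed (max_elems D le) (ileq D left right) (left ` S) \<and> is_sup (max_elems D le) (ileq D left right) (left ` S) p"
      using conjI[OF 2 conjI[OF 3 1]] .
  qed
qed

lemma cont_M: "continuous_poset (max_elems D le) (ileq D left right)"
proof -
  have h: "\<forall>x\<in>max_elems D le. \<exists>S. S \<subseteq> max_elems D le \<inter> wb_down (max_elems D le) (ileq D left right) x \<and>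
      directed (max_elems D le) (ileq D left right) S \<and> is_sup (max_elems D le) (ileq D left right) S x"
    using cont_M_aux by (rule ballI)
  have "\<exists>B. B \<subseteq> max_elems D le \<and> (\<forall>x\<in>max_elems D le. \<exists>S. S \<subseteq> B \<inter> wb_down (max_elems D le) (ileq D left right) x \<and>
      directed (max_elems D le) (ileq D left right) S \<and> is_sup (max_elems D le) (ileq D left right) S x)"
  proof (rule exI[of _ "max_elems D le"])
    show "max_elems D le \<subseteq> max_elems D le \<and> (\<forall>x\<in>max_elems D le. \<exists>S. S \<subseteq> max_elems D le \<inter> wb_down (max_elems D le) (ileq D left right) x \<and>
      directed (max_elems D le) (ileq D left right) S \<and> is_sup (max_elems D le) (ileq D left right) S x)"
      using conjI[OF subset_refl h] .
  qed
  then show ?thesis unfolding continuous_poset_def using conjI[OF poset_M[OF ID]] by blast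
qed

lemma wb_filt: assumes xM: "x \<in> max_elems D le" and yM: "y \<in> max_elems D le"
  shows "way_below (max_elems D le) (ileq D left right) x y \<longleftrightarrow>
    (\<forall>S i. filtered (max_elems D le) (ileq D left right) S \<longrightarrow> is_inf (max_elems D le) (ileq D left right) S i \<longrightarrow>
       ileq D left right i x \<longrightarrow> (\<exists>s\<in>S. ileq D left right s y))"
proof -
  have e2: "way_below (max_elems D le) (\<lambda>x y. ileq D left right y x) y x \<longleftrightarrow>
    (\<forall>S i. filtered (max_elems D le) (ileq D left right) S \<longrightarrow> is_inf (max_elems D le) (ileq D left right) S i \<longrightarrow>
     ileq D left right i x \<longrightarrow> (\<exists>s\<in>S. ileq D left right s y))"
  proof -
    have f: "way_below (max_elems D le) (\<lambda>x y. ileq D left right y x) y x \<longleftrightarrow>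
      y \<in> max_elems D le \<and> x \<in> max_elems D le \<and>
      (\<forall>S i. filtered (max_elems D le) (ileq D left right) S \<longrightarrow> is_inf (max_elems D le) (ileq D left right) S i \<longrightarrow>
       ileq D left right i x \<longrightarrow> (\<exists>s\<in>S. ileq D left right s y))"
      by (rule flip_way_below)
    show ?thesis using f by (simp only: xM yM simp_thms)
  qed
  show ?thesis using wbM_iff[OF xM yM] e2 by (rule HOL.trans)
qed

lemma up_filt: assumes pM: "p \<in> max_elems D le"
  shows "filtered (max_elems D le) (ileq D left right) (wb_up (max_elems D le) (ileq D left right) p)
    \<and> is_inf (max_elems D le) (ileq D left right) (wb_up (max_elems D le) (ileq D left right) p) p"
proof
  obtain S where S0: "S \<subseteq> wb_down D le p" "directed D le S" "psup D le S = p"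
    "left ` S \<subseteq> wb_down (max_elems D le) (ileq D left right) p"
    "right ` S \<subseteq> wb_up (max_elems D le) (ileq D left right) p" by (rule approx_M[OF pM])
  note S = S0(1,2,3,5)
  define R where "R = right ` S"
  have Ri: "is_inf (max_elems D le) (ileq D left right) R p"
    using M1d[OF S(2)] S(3) lr_of_max[OF ID pM] R_def by simp
  have Rf: "filtered (max_elems D le) (ileq D left right) R" using filtered_right[OF S(2)] R_def by simp
  have pp: "ileq D left right p p" using ileq_refl[OF ID pM] .
  have below: "\<exists>t\<in>R. ileq D left right t b" if b: "b \<in> wb_up (max_elems D le) (ileq D left right) p" for b
  proof -
    have "way_below (max_elems D le) (ileq D left right) p b" using b unfolding wb_up_def by blast
    then show ?thesis using wbM_filter[OF _ Rf Ri pp] by blast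
  qed
  have RM: "R \<subseteq> max_elems D le" using Rf unfolding filtered_def by blast
  show "filtered (max_elems D le) (ileq D left right) (wb_up (max_elems D le) (ileq D left right) p)"
    unfolding filtered_def
  proof (intro conjI ballI)
    show "wb_up (max_elems D le) (ileq D left right) p \<subseteq> max_elems D le" unfolding wb_up_def by blast
    obtain r where "r \<in> R" using Rf unfolding filtered_def by blast
    then show "wb_up (max_elems D le) (ileq D left right) p \<noteq> {}"
      using S(4) R_def by blast
    fix b1 b2 assume b1: "b1 \<in> wb_up (max_elems D le) (ileq D left right) p"
      and b2: "b2 \<in> wb_up (max_elems D le) (ileq D left right) p"
    obtain t1 where t1: "t1 \<in> R" "ileq D left right t1 b1" using below[OF b1] by blast
    obtain t2 where t2: "t2 \<in> R" "ileq D left right t2 b2" using below[OF b2] by blast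
    obtain t3 where t3: "t3 \<in> R" "ileq D left right t3 t1" "ileq D left right t3 t2"
      using Rf t1 t2 unfolding filtered_def by blast
    have "ileq D left right t3 b1" using ileq_trans[OF ID t3(2) t1(2)] .
    moreover have "ileq D left right t3 b2" using ileq_trans[OF ID t3(3) t2(2)] .
    moreover have "t3 \<in> wb_up (max_elems D le) (ileq D left right) p" using t3(1) S(4) R_def by blast
    ultimately show "\<exists>z\<in>wb_up (max_elems D le) (ileq D left right) p.
       ileq D left right z b1 \<and> ileq D left right z b2" by blast
  qed
  show "is_inf (max_elems D le) (ileq D left right) (wb_up (max_elems D le) (ileq D left right) p) p"
    unfolding is_inf_def
  proof (intro conjI ballI impI)
    show "p \<in> max_elems D le" by fact
    fix b assume "b \<in> wb_up (max_elems D le) (ileq D left right) p"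
    then show "ileq D left right p b" using way_below_le[OF poset_M[OF ID]] unfolding wb_up_def by blast
  next
    fix u assume uM: "u \<in> max_elems D le"
      and ub: "\<forall>x\<in>wb_up (max_elems D le) (ileq D left right) p. ileq D left right u x"
    have "\<forall>t\<in>R. ileq D left right u t" using ub S(4) R_def by blast
    then show "ileq D left right u p" using Ri uM unfolding is_inf_def by blast
  qed
qed

lemma bicont: "bicontinuous (max_elems D le) (ileq D left right)"
  unfolding bicontinuous_def
  apply (intro conjI ballI)
     apply (rule cont_M)
    apply (erule (1) wb_filt)
   apply (erule up_filt[THEN conjunct1])
  apply (erule up_filt[THEN conjunct2])
  done

lemma part_i: assumes ap: "way_below (max_elems D le) (ileq D left right) a p"
  and pb: "way_below (max_elems D le) (ileq D left right) p b"
  shows "way_below D le (phi_inv D left right a b) p"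
proof -
  have pM: "p \<in> max_elems D le" using ap unfolding way_below_def by blast
  have pD: "p \<in> D" using maxD[OF ID pM] .
  have a_p: "ileq D left right a p" using way_below_le[OF poset_M[OF ID] ap] .
  have p_b: "ileq D left right p b" using way_below_le[OF poset_M[OF ID] pb] .
  have ab: "ileq D left right a b" using ileq_trans[OF ID a_p p_b] .
  note h = iv[OF ID ab]
  show ?thesis unfolding way_below_def
  proof (intro conjI allI impI)
    show "phi_inv D left right a b \<in> D" using h(1) .
    show "p \<in> D" by fact
    fix S s assume dS: "directed D le S" and sS: "is_sup D le S s" and ps: "le p s"
    have sD: "s \<in> D" using sS unfolding is_sup_def by blast
    have "s = p" using maxE[OF ID pM sD ps] .
    then have pss: "psup D le S = p" using psup_eq[OF PO[OF ID] sS] by simp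
    have SD: "S \<subseteq> D" using dS unfolding directed_def by blast
    have sup: "is_sup (max_elems D le) (ileq D left right) (left ` S) p"
      using M1[OF ID dS] pss lr_of_max[OF ID pM] by simp
    obtain z where z: "z \<in> left ` S" "ileq D left right a z"
      using ap directed_left[OF ID dS] sup ileq_refl[OF ID pM] unfolding way_below_def by blast
    then obtain t1 where t1: "t1 \<in> S" "ileq D left right a (left t1)" by blast
    have inf: "is_inf (max_elems D le) (ileq D left right) (right ` S) p"
      using M1d[OF dS] pss lr_of_max[OF ID pM] by simp
    obtain z2 where z2: "z2 \<in> right ` S" "ileq D left right z2 b"
      using wbM_filter[OF pb filtered_right[OF dS] inf ileq_refl[OF ID pM]] by blast
    then obtain t2 where t2: "t2 \<in> S" "ileq D left right (right t2) b" by blast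
    obtain t3 where t3: "t3 \<in> S" "le t1 t3" "le t2 t3" using dS t1 t2 unfolding directed_def by blast
    have D3: "t1 \<in> D" "t2 \<in> D" "t3 \<in> D" using t1 t2 t3 SD by blast+
    have l13: "ileq D left right (left t1) (left t3)" using le_iff[OF ID D3(1) D3(3)] t3(2) by simp
    have 1: "ileq D left right a (left t3)" using ileq_trans[OF ID t1(2) l13] .
    have r32: "ileq D left right (right t3) (right t2)" using le_iff[OF ID D3(2) D3(3)] t3(3) by simp
    have 2: "ileq D left right (right t3) b" using ileq_trans[OF ID r32 t2(2)] .
    have "le (phi_inv D left right a b) t3" using le_iff[OF ID h(1) D3(3)] h(2,3) 1 2 by simp
    then show "\<exists>t\<in>S. le (phi_inv D left right a b) t" using t3 by blast
  qed
qed

lemma OI: assumes ab: "ileq D left right a b"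
  shows "open_interval (max_elems D le) (ileq D left right) a b = wb_up D le (phi_inv D left right a b) \<inter> max_elems D le"
proof (intro set_eqI iffI)
  fix x assume "x \<in> open_interval (max_elems D le) (ileq D left right) a b"
  then have x: "x \<in> max_elems D le" "way_below (max_elems D le) (ileq D left right) a x"
    "way_below (max_elems D le) (ileq D left right) x b" unfolding open_interval_def by blast+
  have "way_below D le (phi_inv D left right a b) x" using part_i[OF x(2,3)] .
  then show "x \<in> wb_up D le (phi_inv D left right a b) \<inter> max_elems D le"
    using x(1) maxD[OF ID x(1)] unfolding wb_up_def by blast
next
  fix x assume "x \<in> wb_up D le (phi_inv D left right a b) \<inter> max_elems D le"
  then have xM: "x \<in> max_elems D le" and wb: "way_below D le (phi_inv D left right a b) x"
    unfolding wb_up_def by blast+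
  note h = iv[OF ID ab]
  have 1: "way_below (max_elems D le) (ileq D left right) a x" using A2[OF ID h(1) xM wb] h(2) by simp
  have "way_below (max_elems D le) (\<lambda>x y. ileq D left right y x) b x" using A2d[OF h(1) xM wb] h(3) by simp
  then have 2: "way_below (max_elems D le) (ileq D left right) x b"
    using wbM_iff[OF xM conjunct2[OF ileq_M[OF ID ab]]] by blast
  show "x \<in> open_interval (max_elems D le) (ileq D left right) a b"
    unfolding open_interval_def using xM 1 2 by blast
qed

lemma OI_empty: assumes "\<not> ileq D left right a b"
  shows "open_interval (max_elems D le) (ileq D left right) a b = {}"
proof -
  have "False" if "x \<in> open_interval (max_elems D le) (ileq D left right) a b" for x
  proof -
    have "way_below (max_elems D le) (ileq D left right) a x" "way_below (max_elems D le) (ileq D left right) x b"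
      using that unfolding open_interval_def by blast+
    then have "ileq D left right a x" "ileq D left right x b" using way_below_le[OF poset_M[OF ID]] by blast+
    then show False using ileq_trans[OF ID \<open>ileq D left right a x\<close> \<open>ileq D left right x b\<close>] assms by blast
  qed
  then show ?thesis by blast
qed

lemma topo: "interval_topology (max_elems D le) (ileq D left right)
           = subtopology (scott_topology D le) (max_elems D le)"
proof -
  define Bs where "Bs = {open_interval (max_elems D le) (ileq D left right) a b | a b.
      a \<in> max_elems D le \<and> b \<in> max_elems D le}"
  have cpD: "continuous_poset D le" using CD[OF ID] unfolding continuous_dcpo_def by blast
  have so: "openin (scott_topology D le) U \<longleftrightarrow> scott_open D le U" for U
    unfolding scott_topology_def using topology_inverse'[OF istopology_scott_open[of D le]] by simp
  have basis: "openin (subtopology (scott_topology D le) (max_elems D le)) s" if sB: "s \<in> Bs" for s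
  proof -
    obtain a b where s: "s = open_interval (max_elems D le) (ileq D left right) a b" using sB unfolding Bs_def by blast
    show ?thesis
    proof (cases "ileq D left right a b")
      case True
      have "openin (scott_topology D le) (wb_up D le (phi_inv D left right a b))"
        using so[of "wb_up D le (phi_inv D left right a b)"] scott_open_wb_up[OF cpD] by blast
      then show ?thesis unfolding openin_subtopology
        by (intro exI[of _ "wb_up D le (phi_inv D left right a b)"] conjI) (simp_all add: OI[OF True] s)
    next
      case False
      then show ?thesis using OI_empty[OF False] s by simp
    qed
  qed
  have fwd: "openin (subtopology (scott_topology D le) (max_elems D le)) U" if "generate_topology_on Bs U" for U
    using generate_topology_on_coarsest[OF istopology_openin basis that] .
  have bwd: "generate_topology_on Bs U" if oU: "openin (subtopology (scott_topology D le) (max_elems D le)) U" for U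
  proof -
    obtain V where V: "scott_open D le V" "U = V \<inter> max_elems D le" using oU unfolding openin_subtopology so by blast
    have cover: "\<exists>s\<in>Bs. p \<in> s \<and> s \<subseteq> U" if pU: "p \<in> U" for p
    proof -
      have pM: "p \<in> max_elems D le" and pV: "p \<in> V" using pU V by blast+
      have pD: "p \<in> D" using maxD[OF ID pM] .
      obtain S where S: "S \<subseteq> wb_down D le p" "directed D le S" "is_sup D le S p" using approx[OF pD] by blast
      obtain x where x: "x \<in> S" "x \<in> V" using V(1) S(2,3) pV unfolding scott_open_def by blast
      have xD: "x \<in> D" and wb: "way_below D le x p" using x S(1) unfolding wb_down_def by blast+
      have lM: "left x \<in> max_elems D le" and rM: "right x \<in> max_elems D le" using lr_max[OF ID xD] by blast+
      have 1: "way_below (max_elems D le) (ileq D left right) (left x) p" using A2[OF ID xD pM wb] .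
      have 2: "way_below (max_elems D le) (ileq D left right) p (right x)"
        using A2d[OF xD pM wb] wbM_iff[OF pM rM] by blast
      have inS: "p \<in> open_interval (max_elems D le) (ileq D left right) (left x) (right x)"
        unfolding open_interval_def using pM 1 2 by blast
      have sub: "open_interval (max_elems D le) (ileq D left right) (left x) (right x) \<subseteq> U"
      proof
        fix q assume "q \<in> open_interval (max_elems D le) (ileq D left right) (left x) (right x)"
        then have q: "q \<in> max_elems D le" "way_below (max_elems D le) (ileq D left right) (left x) q"
          "way_below (max_elems D le) (ileq D left right) q (right x)" unfolding open_interval_def by blast+
        have "ileq D left right (left x) q" "ileq D left right q (right x)"
          using way_below_le[OF poset_M[OF ID] q(2)] way_below_le[OF poset_M[OF ID] q(3)] by blast+
        then have "le x q" using max_le[OF ID xD q(1)] by blast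
        then have "q \<in> V" using V(1) x(2) maxD[OF ID q(1)] unfolding scott_open_def by blast
        then show "q \<in> U" using V(2) q(1) by blast
      qed
      show ?thesis using inS sub lM rM unfolding Bs_def by blast
    qed
    have "U = \<Union>{s \<in> Bs. s \<subseteq> U}" using cover by blast
    moreover have "generate_topology_on Bs (\<Union>{s \<in> Bs. s \<subseteq> U})"
      by (rule generate_topology_on.UN) (blast intro: generate_topology_on.Basis)
    ultimately show ?thesis by simp
  qed
  show ?thesis
    unfolding topology_eq interval_topology_def openin_topology_generated_by_iff Bs_def[symmetric]
    using fwd bwd by blast
qed

lemma gh: "globally_hyperbolic (max_elems D le) (ileq D left right)"
  unfolding globally_hyperbolic_def
proof (intro conjI ballI)
  show "bicontinuous (max_elems D le) (ileq D left right)" using bicont .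
  fix a b assume aM: "a \<in> max_elems D le" and bM: "b \<in> max_elems D le"
  show "compactin (interval_topology (max_elems D le) (ileq D left right))
     {x \<in> max_elems D le. ileq D left right a x \<and> ileq D left right x b}"
  proof (cases "ileq D left right a b")
    case True
    note h = iv[OF ID True]
    have eq: "{x \<in> max_elems D le. ileq D left right a x \<and> ileq D left right x b}
      = {y \<in> max_elems D le. le (phi_inv D left right a b) y}"
    proof (intro set_eqI iffI)
      fix y assume "y \<in> {x \<in> max_elems D le. ileq D left right a x \<and> ileq D left right x b}"
      then have y: "y \<in> max_elems D le" "ileq D left right a y \<and> ileq D left right y b" by blast+
      show "y \<in> {y \<in> max_elems D le. le (phi_inv D left right a b) y}"
        using le_iv_max[OF ID True y(1)] y by blast
    next
      fix y assume "y \<in> {y \<in> max_elems D le. le (phi_inv D left right a b) y}"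
      then have y: "y \<in> max_elems D le" "le (phi_inv D left right a b) y" by blast+
      show "y \<in> {x \<in> max_elems D le. ileq D left right a x \<and> ileq D left right x b}"
        using le_iv_max[OF ID True y(1)] y by blast
    qed
    show ?thesis unfolding topo eq using ID_iv[OF ID] h(1) by blast
  next
    case False
    have e: "{x \<in> max_elems D le. ileq D left right a x \<and> ileq D left right x b} = {}"
    proof (rule ccontr)
      assume "{x \<in> max_elems D le. ileq D left right a x \<and> ileq D left right x b} \<noteq> {}"
      then obtain x where "ileq D left right a x" "ileq D left right x b" by blast
      then show False using ileq_trans[OF ID] False by metis
    qed
    show ?thesis unfolding e by (rule compactin_empty)
  qed
qed

end


theorem mainTheorem13:
  fixes D :: "'a set" and le :: "'a \<Rightarrow> 'a \<Rightarrow> bool" and left right :: "'a \<Rightarrow> 'a"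
  assumes "interval_domain D le left right"
  shows "(\<forall>a p b. way_below (max_elems D le) (ileq D left right) a p
                \<and> way_below (max_elems D le) (ileq D left right) p b
                \<longrightarrow> way_below D le (phi_inv D left right a b) p)
       \<and> interval_topology (max_elems D le) (ileq D left right)
           = subtopology (scott_topology D le) (max_elems D le)
       \<and> globally_hyperbolic (max_elems D le) (ileq D left right)"
proof (intro conjI)
  show "\<forall>a p b. way_below (max_elems D le) (ileq D left right) a p
                \<and> way_below (max_elems D le) (ileq D left right) p b
                \<longrightarrow> way_below D le (phi_inv D left right a b) p"
    using part_i[OF assms] by blast
  show "interval_topology (max_elems D le) (ileq D left right)
           = subtopology (scott_topology D le) (max_elems D le)" using topo[OF assms] .
  show "globally_hyperbolic (max_elems D le) (ileq D left right)" using gh[OF assms] .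
qed

end
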